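(* Consider three CDNs, $CDN_1,CDN_2,CDN_3$, with performance parameters $0\le\beta_1<\beta_2<\beta_3<1$, competing by prices in the model described in the context. Let $(w_1^*,w_2^*,w_3^* )$ be a Nash equilibrium in prices at which each of the three CDNs attracts a set of content providers of positive measure, and let $\Lambda_k^*$ and $J_k^*$ denote the equilibrium number of content providers and revenue of $CDN_k$. Then $$\Lambda_1^*>\Lambda_2^*>2\Lambda_3^*,\qquad w_1^*>1.5\,w_2^*>3\,w_3^*,$$ and consequently the revenue of $CDN_2$ is at least four times that of $CDN_3$, the revenue of $CDN_1$ is at least six times that of $CDN_3$, and $J_1^*>1.5\,J_2^*>6\,J_3^*$.
   Context: Each $CDN_k$ ($k=1,2,3$) has a fixed performance parameter $\beta_k\in[0,1)$ and announces a price $w_k\ge0$. There is a continuum of content providers of total mass $\Lambda>0$ whose sensitivity parameters $\theta$ are uniformly distributed on $[0,1]$. A content provider with sensitivity $\theta$ that hires $CDN_k$ obtains payoff $U(\theta,k)=\theta(1-\beta_k)-w_k$; hiring no CDN gives payoff $0$. Each content provider hires at most one CDN and chooses an option of maximum payoff (indifferent providers form a set of measure zero). $\Lambda_k(w_1,w_2,w_3)$ is $\Lambda$ times the measure of the set of $\theta\in[0,1]$ choosing $CDN_k$, and the revenue of $CDN_k$ is $J_k=\Lambda_k w_k$. A Nash equilibrium is a price vector $(w_1^*,w_2^*,w_3^* )$ such that no $CDN_k$ can increase $J_k$ by changing only its own price $w_k\ge0$. *)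

theory Defs
  imports "HOL-Analysis.Analysis"
begin

text \<open>CDNs are indexed by 1, 2, 3. beta k is the performance parameter, w k the price.\<close>

definition CDNs :: "nat set" where "CDNs = {1, 2, 3}"

definition payoff :: "(nat \<Rightarrow> real) \<Rightarrow> (nat \<Rightarrow> real) \<Rightarrow> real \<Rightarrow> nat \<Rightarrow> real" where
  "payoff beta w theta k = theta * (1 - beta k) - w k"

text \<open>Set of sensitivities theta in [0,1] that choose CDN k (strictly best option,
  strictly better than hiring no CDN; indifferent providers form a null set).\<close>
definition chooses :: "(nat \<Rightarrow> real) \<Rightarrow> (nat \<Rightarrow> real) \<Rightarrow> nat \<Rightarrow> real set" where
  "chooses beta w k = {theta \<in> {0..1}. payoff beta w theta k > 0 \<and>
      (\<forall>j\<in>CDNs. j \<noteq> k \<longrightarrow> payoff beta w theta k > payoff beta w theta j)}"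

definition demand :: "real \<Rightarrow> (nat \<Rightarrow> real) \<Rightarrow> (nat \<Rightarrow> real) \<Rightarrow> nat \<Rightarrow> real" where
  "demand Lam beta w k = Lam * measure lborel (chooses beta w k)"

definition revenue :: "real \<Rightarrow> (nat \<Rightarrow> real) \<Rightarrow> (nat \<Rightarrow> real) \<Rightarrow> nat \<Rightarrow> real" where
  "revenue Lam beta w k = demand Lam beta w k * w k"

definition nash_eq :: "real \<Rightarrow> (nat \<Rightarrow> real) \<Rightarrow> (nat \<Rightarrow> real) \<Rightarrow> bool" where
  "nash_eq Lam beta w \<longleftrightarrow> (\<forall>k\<in>CDNs. w k \<ge> 0) \<and>
     (\<forall>k\<in>CDNs. \<forall>w'. w' \<ge> 0 \<longrightarrow> revenue Lam beta (w(k := w')) k \<le> revenue Lam beta w k)"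

end

theory Submission
  imports Defs
begin


lemma foc:
  fixes A B K lo hi w :: real
  assumes B: "B > 0" and K: "K > 0" and lw: "lo < w" and wh: "w < hi" and w0: "0 \<le> w"
    and lam: "A - B*w > 0"
    and H: "\<forall>x. lo<x \<and> x<hi \<and> 0\<le>x \<longrightarrow> K*(x*(A-B*x)) \<le> K*(w*(A-B*w))"
  shows "A = 2*B*w"
proof -
  have H': "x*(A-B*x) \<le> w*(A-B*w)" if "lo<x" "x<hi" "0\<le>x" for x
    using H that K by auto
  define c where "c = A - 2*B*w"
  have c1: "c \<le> 0"
  proof (rule ccontr)
    assume "\<not> c \<le> 0" hence cp: "c > 0" by simp
    define t where "t = min ((hi-w)/2) (c/(2*B))"
    have tp: "t > 0" using cp B wh by (simp add: t_def)
    have t1: "t \<le> (hi-w)/2" and t2: "t \<le> c/(2*B)" unfolding t_def by (rule min.cobounded1, rule min.cobounded2)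
    have Bt: "B*t \<le> c/2" using t2 B by (simp add: field_simps)
    have "B*t*t \<le> (t*c)/2" using Bt tp by (simp add: mult_right_mono)
    moreover have "(w+t)*(A-B*(w+t)) - w*(A-B*w) = t*c - B*t*t"
      by (simp add: c_def algebra_simps)
    moreover have "(w+t)*(A-B*(w+t)) \<le> w*(A-B*w)" using H'[of "w+t"] lw t1 tp w0 wh by auto
    moreover have "t*c > 0" using tp cp by simp
    ultimately show False by linarith
  qed
  have wp: "w > 0"
  proof -
    have "B*w > 0" using c1 lam by (simp add: c_def)
    thus ?thesis using B by (simp add: zero_less_mult_iff)
  qed
  have c2: "c \<ge> 0"
  proof (rule ccontr)
    assume "\<not> c \<ge> 0" hence cp: "-c > 0" by simp
    define t where "t = min (min ((w-lo)/2) (w/2)) (-c/(2*B))"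
    have tp: "t > 0" using cp B lw wp by (simp add: t_def divide_neg_pos)
    have t1: "t \<le> (w-lo)/2" and t3: "t \<le> w/2" and t2: "t \<le> -c/(2*B)" unfolding t_def by (simp_all add: min_def)
    have Bt: "B*t \<le> -c/2" using t2 B by (simp add: field_simps)
    have "B*t*t \<le> (t*(-c))/2" using mult_right_mono[OF Bt, of t] tp by (simp add: algebra_simps)
    moreover have "(w-t)*(A-B*(w-t)) - w*(A-B*w) = t*(-c) - B*t*t"
      by (simp add: c_def algebra_simps)
    moreover have "(w-t)*(A-B*(w-t)) \<le> w*(A-B*w)" using H'[of "w-t"] lw t1 t3 tp w0 wh by auto
    moreover have "t*(-c) > 0" using mult_pos_pos[OF tp cp] by simp
    ultimately show False by linarith
  qed
  show ?thesis using c1 c2 by (simp add: c_def)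
qed



lemma mem_ch:
  "\<theta> \<in> chooses beta v k \<longleftrightarrow> 0 \<le> \<theta> \<and> \<theta> \<le> 1 \<and> \<theta>*(1-beta k) - v k > 0 \<and>
     (\<forall>j\<in>{1,2,3}. j \<noteq> k \<longrightarrow> \<theta>*(1-beta k) - v k > \<theta>*(1-beta j) - v j)"
  by (auto simp: chooses_def CDNs_def payoff_def)

lemma ch_nonempty:
  assumes "demand Lam beta w k > 0" obtains \<theta> where "\<theta> \<in> chooses beta w k"
proof -
  have "chooses beta w k \<noteq> {}"
  proof
    assume "chooses beta w k = {}"
    then have "demand Lam beta w k = 0" by (simp add: demand_def)
    with assms show False by simp
  qed
  then show ?thesis using that by blast
qed

theorem theorem2:
  fixes Lam :: real and beta w :: "nat \<Rightarrow> real"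
  assumes "Lam > 0"
    and "0 \<le> beta 1" and "beta 1 < beta 2" and "beta 2 < beta 3" and "beta 3 < 1"
    and "nash_eq Lam beta w"
    and "\<forall>k\<in>CDNs. demand Lam beta w k > 0"
  shows "demand Lam beta w 1 > demand Lam beta w 2 \<and> demand Lam beta w 2 > 2 * demand Lam beta w 3
       \<and> w 1 > 1.5 * w 2 \<and> 1.5 * w 2 > 3 * w 3
       \<and> revenue Lam beta w 2 \<ge> 4 * revenue Lam beta w 3
       \<and> revenue Lam beta w 1 \<ge> 6 * revenue Lam beta w 3
       \<and> revenue Lam beta w 1 > 1.5 * revenue Lam beta w 2
       \<and> 1.5 * revenue Lam beta w 2 > 6 * revenue Lam beta w 3"
proof -
  define a3 where "a3 = 1 - beta 3"
  define d2 where "d2 = beta 3 - beta 2"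
  define d1 where "d1 = beta 2 - beta 1"
  have a3p: "a3 > 0" and d2p: "d2 > 0" and d1p: "d1 > 0"
    using assms by (auto simp: a3_def d2_def d1_def)
  have b3: "beta 3 = 1 - a3" and b2: "beta 2 = 1 - a3 - d2" and b1: "beta 1 = 1 - a3 - d2 - d1"
    by (auto simp: a3_def d2_def d1_def)
  have b1s: "beta (Suc 0) = 1 - a3 - d2 - d1" using b1 by simp
  have mem1: "\<theta> \<in> chooses beta v 1 \<longleftrightarrow> 0 \<le> \<theta> \<and> \<theta> \<le> 1 \<and> \<theta>*a3 + \<theta>*d2 + \<theta>*d1 - v 1 > 0
      \<and> \<theta>*d1 - v 1 > - v 2 \<and> \<theta>*d2 + \<theta>*d1 - v 1 > - v 3" for \<theta> v
    unfolding mem_ch by (simp add: b1 b1s b2 b3 algebra_simps)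
  have mem2: "\<theta> \<in> chooses beta v 2 \<longleftrightarrow> 0 \<le> \<theta> \<and> \<theta> \<le> 1 \<and> \<theta>*a3 + \<theta>*d2 - v 2 > 0
      \<and> - v 2 > \<theta>*d1 - v 1 \<and> \<theta>*d2 - v 2 > - v 3" for \<theta> v
    unfolding mem_ch by (simp add: b1 b1s b2 b3 algebra_simps)
  have mem3: "\<theta> \<in> chooses beta v 3 \<longleftrightarrow> 0 \<le> \<theta> \<and> \<theta> \<le> 1 \<and> \<theta>*a3 - v 3 > 0
      \<and> - v 3 > \<theta>*d2 - v 2 \<and> - v 3 > \<theta>*d2 + \<theta>*d1 - v 1" for \<theta> v
    unfolding mem_ch by (simp add: b1 b1s b2 b3 algebra_simps) blast

  have nash: "\<forall>k\<in>CDNs. w k \<ge> 0" "\<forall>k\<in>CDNs. \<forall>w'. w' \<ge> 0 \<longrightarrow> revenue Lam beta (w(k := w')) k \<le> revenue Lam beta w k"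
    using assms(6) unfolding nash_eq_def by auto
  have w10: "w 1 \<ge> 0" and w20: "w 2 \<ge> 0" and w30: "w 3 \<ge> 0" using nash(1) by (auto simp: CDNs_def)
  have opt1: "\<And>x. x \<ge> 0 \<Longrightarrow> revenue Lam beta (w(1 := x)) 1 \<le> revenue Lam beta w 1"
   and opt2: "\<And>x. x \<ge> 0 \<Longrightarrow> revenue Lam beta (w(2 := x)) 2 \<le> revenue Lam beta w 2"
   and opt3: "\<And>x. x \<ge> 0 \<Longrightarrow> revenue Lam beta (w(3 := x)) 3 \<le> revenue Lam beta w 3"
    using nash(2) by (auto simp: CDNs_def)
  have D1: "demand Lam beta w 1 > 0" and D2: "demand Lam beta w 2 > 0" and D3: "demand Lam beta w 3 > 0"
    using assms(7) by (auto simp: CDNs_def)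
  define u1 where "u1 = 1/d1"
  define u2 where "u2 = 1/d2"
  define u3 where "u3 = 1/a3"
  have u1p: "u1 > 0" and u2p: "u2 > 0" and u3p: "u3 > 0" using a3p d1p d2p by (auto simp: u1_def u2_def u3_def)
  have du1: "d1*u1 = 1" and du2: "d2*u2 = 1" and du3: "a3*u3 = 1" using a3p d1p d2p by (auto simp: u1_def u2_def u3_def)
  define p where "p = w 3 * u3"
  define q where "q = (w 2 - w 3) * u2"
  define r where "r = (w 1 - w 2) * u1"
  have pa: "p*a3 = w 3" unfolding p_def using du3 by (simp add: algebra_simps)
  have qd: "q*d2 = w 2 - w 3" unfolding q_def using du2 by (metis mult.commute mult.left_commute mult_1_right)
  have rd: "r*d1 = w 1 - w 2" unfolding r_def using du1 by (metis mult.commute mult.left_commute mult_1_right)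
  have p0: "p \<ge> 0" unfolding p_def using w30 u3p by simp
  obtain t3 where t3: "t3 \<in> chooses beta w 3" using ch_nonempty[OF D3] .
  obtain t2 where t2: "t2 \<in> chooses beta w 2" using ch_nonempty[OF D2] .
  obtain t1 where t1: "t1 \<in> chooses beta w 1" using ch_nonempty[OF D1] .
  have pq: "p < q"
  proof -
    have "t3*a3 > p*a3" "t3*d2 < q*d2" using t3 pa qd unfolding mem3 by auto
    hence "p < t3" "t3 < q" using a3p d2p by (auto simp: mult_less_cancel_right_pos)
    thus ?thesis by simp
  qed
  have qr: "q < r"
  proof -
    have "t2*d2 > q*d2" "t2*d1 < r*d1" using t2 rd qd unfolding mem2 by auto
    hence "q < t2" "t2 < r" using d1p d2p by (auto simp: mult_less_cancel_right_pos)
    thus ?thesis by simp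
  qed
  have r1: "r < 1"
  proof -
    have "t1*d1 > r*d1" "t1 \<le> 1" using t1 rd unfolding mem1 by auto
    hence "r < t1" "t1 \<le> 1" using d1p by (auto simp: mult_less_cancel_right_pos)
    thus ?thesis by simp
  qed

  have dev1: "demand Lam beta (w(1:=x)) 1 = Lam * ((1 + w 2 * u1) - u1 * x)"
    if "w 2 + d1*q < x" "x < w 2 + d1" for x
  proof -
    define rx where "rx = (x - w 2)*u1"
    have rxd: "rx*d1 = x - w 2" unfolding rx_def using du1 by (metis mult.commute mult.left_commute mult_1_right)
    have "q*d1 < rx*d1" using that rxd by (simp add: mult.commute)
    hence qrx: "q < rx" using d1p by (simp add: mult_less_cancel_right_pos)
    have "rx*d1 < 1*d1" using that rxd by simp
    hence rx1: "rx < 1" using d1p by (simp only: mult_less_cancel_right_pos)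
    have S: "chooses beta (w(1:=x)) 1 = {rx<..1}"
    proof (rule set_eqI)
      fix \<theta>
      show "\<theta> \<in> chooses beta (w(1:=x)) 1 \<longleftrightarrow> \<theta> \<in> {rx<..1}"
      proof
        assume "\<theta> \<in> chooses beta (w(1:=x)) 1"
        hence "\<theta>*d1 > rx*d1" "\<theta> \<le> 1" unfolding mem1 using rxd by auto
        thus "\<theta> \<in> {rx<..1}" using d1p by (auto simp: mult_less_cancel_right_pos)
      next
        assume h: "\<theta> \<in> {rx<..1}"
        hence ht: "\<theta> > rx" "\<theta> \<le> 1" by auto
        hence "\<theta>*d1 > rx*d1" "\<theta>*d2 > q*d2" "\<theta>*a3 > p*a3" "\<theta> \<ge> 0"
          using qrx pq p0 d1p d2p a3p by (auto simp: mult_less_cancel_right_pos)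
        thus "\<theta> \<in> chooses beta (w(1:=x)) 1" unfolding mem1 using rxd qd pa ht by auto
      qed
    qed
    have "demand Lam beta (w(1:=x)) 1 = Lam*(1 - rx)" using S rx1 by (simp add: demand_def)
    thus ?thesis by (simp add: rx_def algebra_simps)
  qed
  have w1in: "w 2 + d1*q < w 1" "w 1 < w 2 + d1"
  proof -
    have "q*d1 < r*d1" "r*d1 < 1*d1" using qr r1 d1p by (auto simp: mult_less_cancel_right_pos)
    thus "w 2 + d1*q < w 1" "w 1 < w 2 + d1" using rd by (auto simp: mult.commute)
  qed
  have F1: "1 + w 2 * u1 = 2 * u1 * w 1"
  proof (rule foc[where K=Lam and lo="w 2 + d1*q" and hi="w 2 + d1"])
    show "u1 > 0" "Lam > 0" "w 2 + d1*q < w 1" "w 1 < w 2 + d1" "0 \<le> w 1" using u1p assms(1) w1in w10 by auto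
    show "1 + w 2 * u1 - u1 * w 1 > 0" using r1 unfolding r_def by (simp add: algebra_simps)
    show "\<forall>x. w 2 + d1 * q < x \<and> x < w 2 + d1 \<and> 0 \<le> x \<longrightarrow>
       Lam * (x * (1 + w 2 * u1 - u1 * x)) \<le> Lam * (w 1 * (1 + w 2 * u1 - u1 * w 1))"
    proof (intro allI impI)
      fix x assume hx: "w 2 + d1 * q < x \<and> x < w 2 + d1 \<and> 0 \<le> x"
      have "revenue Lam beta (w(1 := x)) 1 \<le> revenue Lam beta w 1" using opt1 hx by auto
      moreover have "revenue Lam beta (w(1 := x)) 1 = Lam * (x * (1 + w 2 * u1 - u1 * x))"
        using dev1[of x] hx by (simp add: revenue_def)
      moreover have "revenue Lam beta w 1 = Lam * (w 1 * (1 + w 2 * u1 - u1 * w 1))"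
        using dev1[of "w 1"] w1in by (simp add: revenue_def)
      ultimately show "Lam * (x * (1 + w 2 * u1 - u1 * x)) \<le> Lam * (w 1 * (1 + w 2 * u1 - u1 * w 1))" by simp
    qed
  qed

  define lo2 where "lo2 = max (w 3 + d2*p) (w 1 - d1)"
  define hi2 where "hi2 = (d2 * w 1 + d1 * w 3)/(d1+d2)"
  have dev2: "demand Lam beta (w(2:=x)) 2 = Lam * ((w 1 * u1 + w 3 * u2) - (u1+u2) * x)"
    if "lo2 < x" "x < hi2" for x
  proof -
    define rx where "rx = (w 1 - x)*u1"
    define qx where "qx = (x - w 3)*u2"
    have rxd: "rx*d1 = w 1 - x" unfolding rx_def using du1 by (metis mult.commute mult.left_commute mult_1_right)
    have qxd: "qx*d2 = x - w 3" unfolding qx_def using du2 by (metis mult.commute mult.left_commute mult_1_right)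
    have "p*d2 < qx*d2" using that qxd unfolding lo2_def by (simp add: mult.commute)
    hence pqx: "p < qx" using d2p by (simp add: mult_less_cancel_right_pos)
    have "rx*d1 < 1*d1" using that rxd unfolding lo2_def by simp
    hence rx1: "rx < 1" using d1p by (simp only: mult_less_cancel_right_pos)
    have "x*(d1+d2) < d2 * w 1 + d1 * w 3" using that d1p d2p unfolding hi2_def by (simp add: pos_less_divide_eq)
    moreover have "qx*(d1*d2) = (x - w 3)*d1" "rx*(d1*d2) = (w 1 - x)*d2" using qxd rxd
      by (metis mult.assoc mult.commute)+
    ultimately have "qx*(d1*d2) < rx*(d1*d2)" by (simp add: algebra_simps)
    hence qxrx: "qx < rx" using d1p d2p by (simp add: mult_less_cancel_right_pos)
    have S: "chooses beta (w(2:=x)) 2 = {qx<..<rx}"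
    proof (rule set_eqI)
      fix \<theta>
      show "\<theta> \<in> chooses beta (w(2:=x)) 2 \<longleftrightarrow> \<theta> \<in> {qx<..<rx}"
      proof
        assume "\<theta> \<in> chooses beta (w(2:=x)) 2"
        hence "\<theta>*d1 < rx*d1" "\<theta>*d2 > qx*d2" unfolding mem2 using rxd qxd by auto
        thus "\<theta> \<in> {qx<..<rx}" using d1p d2p by (auto simp: mult_less_cancel_right_pos)
      next
        assume h: "\<theta> \<in> {qx<..<rx}"
        hence ht: "\<theta> > qx" "\<theta> < rx" by auto
        hence "\<theta>*d1 < rx*d1" "\<theta>*d2 > qx*d2" "\<theta>*a3 > p*a3" "\<theta> \<ge> 0" "\<theta> \<le> 1"
          using pqx rx1 p0 d1p d2p a3p by (auto simp: mult_less_cancel_right_pos)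
        thus "\<theta> \<in> chooses beta (w(2:=x)) 2" unfolding mem2 using rxd qxd pa ht by auto
      qed
    qed
    have "demand Lam beta (w(2:=x)) 2 = Lam*(rx - qx)" using S qxrx by (simp add: demand_def)
    thus ?thesis by (simp add: rx_def qx_def algebra_simps)
  qed
  have w2in: "lo2 < w 2" "w 2 < hi2"
  proof -
    have "p*d2 < q*d2" "r*d1 < 1*d1" using pq r1 d1p d2p by (auto simp: mult_less_cancel_right_pos)
    thus "lo2 < w 2" using qd rd unfolding lo2_def by (auto simp: mult.commute)
    have "q*(d1*d2) < r*(d1*d2)" using qr d1p d2p by (simp add: mult_less_cancel_right_pos)
    moreover have "q*(d1*d2) = (w 2 - w 3)*d1" "r*(d1*d2) = (w 1 - w 2)*d2" using qd rd
      by (metis mult.assoc mult.commute)+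
    ultimately have "w 2*(d1+d2) < d2 * w 1 + d1 * w 3" by (simp add: algebra_simps)
    thus "w 2 < hi2" using d1p d2p unfolding hi2_def by (simp add: pos_less_divide_eq)
  qed
  have F2: "w 1 * u1 + w 3 * u2 = 2 * (u1+u2) * w 2"
  proof (rule foc[where K=Lam and lo="lo2" and hi="hi2"])
    show "u1 + u2 > 0" "Lam > 0" "lo2 < w 2" "w 2 < hi2" "0 \<le> w 2" using u1p u2p assms(1) w2in w20 by auto
    show "w 1 * u1 + w 3 * u2 - (u1+u2) * w 2 > 0" using qr unfolding r_def q_def by (simp add: algebra_simps)
    show "\<forall>x. lo2 < x \<and> x < hi2 \<and> 0 \<le> x \<longrightarrow>
       Lam * (x * (w 1 * u1 + w 3 * u2 - (u1+u2) * x)) \<le> Lam * (w 2 * (w 1 * u1 + w 3 * u2 - (u1+u2) * w 2))"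
    proof (intro allI impI)
      fix x assume hx: "lo2 < x \<and> x < hi2 \<and> 0 \<le> x"
      have "revenue Lam beta (w(2 := x)) 2 \<le> revenue Lam beta w 2" using opt2 hx by auto
      moreover have "revenue Lam beta (w(2 := x)) 2 = Lam * (x * (w 1 * u1 + w 3 * u2 - (u1+u2) * x))"
        using dev2[of x] hx by (simp add: revenue_def)
      moreover have "revenue Lam beta w 2 = Lam * (w 2 * (w 1 * u1 + w 3 * u2 - (u1+u2) * w 2))"
        using dev2[of "w 2"] w2in by (simp add: revenue_def)
      ultimately show "Lam * (x * (w 1 * u1 + w 3 * u2 - (u1+u2) * x)) \<le> Lam * (w 2 * (w 1 * u1 + w 3 * u2 - (u1+u2) * w 2))" by simp
    qed
  qed
  define lo3 where "lo3 = w 2 - d2*r"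
  define hi3 where "hi3 = w 2 * a3/(a3+d2)"
  have dev3: "demand Lam beta (w(3:=x)) 3 = Lam * (w 2 * u2 - (u2+u3) * x)"
    if "lo3 < x" "x < hi3" "0 \<le> x" for x
  proof -
    define px where "px = x*u3"
    define qx where "qx = (w 2 - x)*u2"
    have pxa: "px*a3 = x" unfolding px_def using du3 by (metis mult.commute mult.left_commute mult_1_right)
    have qxd: "qx*d2 = w 2 - x" unfolding qx_def using du2 by (metis mult.commute mult.left_commute mult_1_right)
    have px0: "px \<ge> 0" unfolding px_def using that u3p by simp
    have "qx*d2 < r*d2" using that qxd unfolding lo3_def by (simp add: mult.commute)
    hence qxr: "qx < r" using d2p by (simp add: mult_less_cancel_right_pos)
    have "x*(a3+d2) < w 2 * a3" using that a3p d2p unfolding hi3_def by (simp add: pos_less_divide_eq)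
    hence hh: "x*d2 < (w 2 - x)*a3" by (simp add: algebra_simps)
    have e1: "px*(a3*d2) = x*d2" and e2: "qx*(a3*d2) = (w 2 - x)*a3" using pxa qxd
      by (metis mult.assoc mult.commute)+
    have "px*(a3*d2) < qx*(a3*d2)" unfolding e1 e2 by (rule hh)
    hence pxqx: "px < qx" using a3p d2p by (simp add: mult_less_cancel_right_pos)
    have S: "chooses beta (w(3:=x)) 3 = {px<..<qx}"
    proof (rule set_eqI)
      fix \<theta>
      show "\<theta> \<in> chooses beta (w(3:=x)) 3 \<longleftrightarrow> \<theta> \<in> {px<..<qx}"
      proof
        assume "\<theta> \<in> chooses beta (w(3:=x)) 3"
        hence "\<theta>*a3 > px*a3" "\<theta>*d2 < qx*d2" unfolding mem3 using pxa qxd by auto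
        thus "\<theta> \<in> {px<..<qx}" using a3p d2p by (auto simp: mult_less_cancel_right_pos)
      next
        assume h: "\<theta> \<in> {px<..<qx}"
        hence ht: "\<theta> > px" "\<theta> < qx" by auto
        hence "\<theta>*a3 > px*a3" "\<theta>*d2 < qx*d2" "\<theta>*d1 < r*d1" "\<theta> \<ge> 0" "\<theta> \<le> 1"
          using px0 qxr r1 d1p d2p a3p by (auto simp: mult_less_cancel_right_pos)
        thus "\<theta> \<in> chooses beta (w(3:=x)) 3" unfolding mem3 using pxa qxd rd ht by auto
      qed
    qed
    have "demand Lam beta (w(3:=x)) 3 = Lam*(qx - px)" using S pxqx by (simp add: demand_def)
    thus ?thesis by (simp add: px_def qx_def algebra_simps)
  qed
  have w3in: "lo3 < w 3" "w 3 < hi3"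
  proof -
    have "q*d2 < r*d2" using qr d2p by (auto simp: mult_less_cancel_right_pos)
    thus "lo3 < w 3" using qd unfolding lo3_def by (auto simp: mult.commute)
    have "p*(a3*d2) < q*(a3*d2)" using pq a3p d2p by (simp add: mult_less_cancel_right_pos)
    moreover have e1: "p*(a3*d2) = w 3*d2" and e2: "q*(a3*d2) = (w 2 - w 3)*a3" using pa qd
      by (metis mult.assoc mult.commute)+
    ultimately have "w 3*d2 < (w 2 - w 3)*a3" by simp
    hence "w 3*(a3+d2) < w 2 * a3" by (simp add: algebra_simps)
    thus "w 3 < hi3" using a3p d2p unfolding hi3_def by (simp add: pos_less_divide_eq)
  qed
  have F3: "w 2 * u2 = 2 * (u2+u3) * w 3"
  proof (rule foc[where K=Lam and lo="lo3" and hi="hi3"])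
    show "u2 + u3 > 0" "Lam > 0" "lo3 < w 3" "w 3 < hi3" "0 \<le> w 3" using u3p u2p assms(1) w3in w30 by auto
    show "w 2 * u2 - (u2+u3) * w 3 > 0" using pq unfolding p_def q_def by (simp add: algebra_simps)
    show "\<forall>x. lo3 < x \<and> x < hi3 \<and> 0 \<le> x \<longrightarrow>
       Lam * (x * (w 2 * u2 - (u2+u3) * x)) \<le> Lam * (w 3 * (w 2 * u2 - (u2+u3) * w 3))"
    proof (intro allI impI)
      fix x assume hx: "lo3 < x \<and> x < hi3 \<and> 0 \<le> x"
      have "revenue Lam beta (w(3 := x)) 3 \<le> revenue Lam beta w 3" using opt3 hx by auto
      moreover have "revenue Lam beta (w(3 := x)) 3 = Lam * (x * (w 2 * u2 - (u2+u3) * x))"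
        using dev3[of x] hx by (simp add: revenue_def)
      moreover have "revenue Lam beta w 3 = Lam * (w 3 * (w 2 * u2 - (u2+u3) * w 3))"
        using dev3[of "w 3"] w3in w30 by (simp add: revenue_def)
      ultimately show "Lam * (x * (w 2 * u2 - (u2+u3) * x)) \<le> Lam * (w 3 * (w 2 * u2 - (u2+u3) * w 3))" by simp
    qed
  qed

  have F1': "(1 + w 2 * u1) - u1 * w 1 = u1 * w 1" using F1 by (simp add: algebra_simps)
  have Dw1: "demand Lam beta w 1 = Lam * (u1 * w 1)" using dev1[of "w 1"] w1in unfolding F1' by simp
  have F2': "(w 1 * u1 + w 3 * u2) - (u1+u2) * w 2 = (u1+u2) * w 2" using F2 by (simp add: algebra_simps)
  have Dw2: "demand Lam beta w 2 = Lam * ((u1+u2) * w 2)" using dev2[of "w 2"] w2in unfolding F2' by simp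
  have F3': "w 2 * u2 - (u2+u3) * w 3 = (u2+u3) * w 3" using F3 by (simp add: algebra_simps)
  have Dw3: "demand Lam beta w 3 = Lam * ((u2+u3) * w 3)" using dev3[of "w 3"] w3in w30 unfolding F3' by simp
  have w3p: "w 3 > 0" using D3 Dw3 assms(1) u2p u3p by (simp add: zero_less_mult_iff)
  have w2p: "w 2 > 0" using D2 Dw2 assms(1) u2p u1p by (simp add: zero_less_mult_iff)
  have "(w 2 - 2 * w 3) * u2 = 2 * u3 * w 3" using F3 by (simp add: algebra_simps)
  moreover have "2 * u3 * w 3 > 0" using u3p w3p by simp
  ultimately have "(w 2 - 2 * w 3) * u2 > 0" by linarith
  hence w23: "w 2 > 2 * w 3" using u2p by (simp add: zero_less_mult_iff)
  have "(w 1 - 2 * w 2) * u1 = u2 * (2 * w 2 - w 3)" using F2 by (simp add: algebra_simps)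
  moreover have "u2 * (2 * w 2 - w 3) > 0" using u2p w23 w3p by simp
  ultimately have "(w 1 - 2 * w 2) * u1 > 0" by linarith
  hence w12: "w 1 > 2 * w 2" using u1p by (simp add: zero_less_mult_iff)
  have "u1 * w 1 - (u1+u2) * w 2 = u1 * w 2 + u2 * (w 2 - w 3)" using F2 by (simp add: algebra_simps)
  moreover have "u1 * w 2 + u2 * (w 2 - w 3) > 0" using u1p u2p w2p w23 w3p by (simp add: add_pos_pos)
  ultimately have l12: "u1 * w 1 > (u1+u2) * w 2" by simp
  have "(u1+u2) * w 2 - 2 * ((u2+u3) * w 3) = u1 * w 2" using F3 by (simp add: algebra_simps)
  moreover have "u1 * w 2 > 0" using u1p w2p by simp
  ultimately have l23: "(u1+u2) * w 2 > 2 * ((u2+u3) * w 3)" by simp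
  have DD12: "demand Lam beta w 1 > demand Lam beta w 2" using l12 assms(1) Dw1 Dw2 by simp
  have DD23: "demand Lam beta w 2 > 2 * demand Lam beta w 3" using l23 assms(1) Dw2 Dw3 by simp
  define J1 where "J1 = revenue Lam beta w 1"
  define J2 where "J2 = revenue Lam beta w 2"
  define J3 where "J3 = revenue Lam beta w 3"
  have J3p: "J3 > 0" using D3 w3p by (simp add: J3_def revenue_def)
  have "(2 * demand Lam beta w 3) * (2 * w 3) < demand Lam beta w 2 * w 2"
    by (rule mult_strict_mono) (use DD23 w23 D3 w3p D2 in auto)
  hence J23: "J2 > 4 * J3" by (simp add: J2_def J3_def revenue_def)
  have "demand Lam beta w 2 * (2 * w 2) < demand Lam beta w 1 * w 1"
    by (rule mult_strict_mono) (use DD12 w12 D2 w2p D1 in auto)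
  hence J12: "J1 > 2 * J2" by (simp add: J1_def J2_def revenue_def)
  show ?thesis
    using DD12 DD23 w12 w23 w2p J23 J12 J3p unfolding J1_def[symmetric] J2_def[symmetric] J3_def[symmetric]
    by auto
qed
end
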